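(* Let $(E_j)_{j\ge1}$ be i.i.d. standard exponential random variables and $(U_j)_{j\ge1}$ i.i.d. uniform $[0,1]$ random variables, all independent. For $k\ge1$ let $$A_k=\Big(E_1+\frac{E_2}{U_1}+\dots+\frac{E_k}{U_1\cdots U_{k-1}}\Big)\big(1-U_1\cdots U_k\big).$$ Then for every integer $k\ge1$ and every $s>0$, $$P(A_k>s)=-I(s)\int_0^s e^{\xi}p_{k-1}(\xi)\,d\xi+\sum_{j=0}^{k-1}p_j(s).$$
   Context: $\sigma_1(k,j)$ are the unsigned Stirling numbers of the first kind ($\sigma_1(k,j)=0$ for $k<j$, $\sigma_1(0,0)=1$); $p_j(t)=e^{-t}\sum_{k=j}^\infty \frac{t^k}{k!}\frac{\sigma_1(k,j)}{k!}$ for $j\ge0$; $I(s)=\int_s^\infty \frac{e^{-\xi}}{\xi}\,d\xi$. *)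

theory Defs
  imports "HOL-Probability.Probability" "HOL-Combinatorics.Stirling"
begin

text \<open>Unsigned Stirling numbers of the first kind: library constant stirling.
  p_j(t) = exp(-t) * sum_{k >= j} t^k/k! * sigma_1(k,j)/k!  (sum reindexed k = n + j).\<close>
definition pfun :: "nat \<Rightarrow> real \<Rightarrow> real" where
  "pfun j t = exp (- t) *
     (\<Sum>n. t ^ (n + j) / fact (n + j) * real (stirling (n + j) j) / fact (n + j))"

definition Ifun :: "real \<Rightarrow> real" where
  "Ifun s = (LBINT \<xi>=ereal s..\<infinity>. exp (- \<xi>) / \<xi>)"

definition Avar :: "(nat \<Rightarrow> 'a \<Rightarrow> real) \<Rightarrow> (nat \<Rightarrow> 'a \<Rightarrow> real) \<Rightarrow> nat \<Rightarrow> 'a \<Rightarrow> real" where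
  "Avar E U k \<omega> = (\<Sum>i=1..k. E i \<omega> / (\<Prod>l=1..i-1. U l \<omega>)) * (1 - (\<Prod>l=1..k. U l \<omega>))"

end

theory Submission
  imports Defs
begin


definition cc :: "nat \<Rightarrow> nat \<Rightarrow> real" where
  "cc j m = real (stirling m j) / (fact m)^2"

definition hh :: "nat \<Rightarrow> real \<Rightarrow> real" where
  "hh j x = (\<Sum>m. cc j m * x^m)"

lemma stirling_le_fact: "stirling n k \<le> fact n"
proof (cases "k \<le> n")
  case True
  have "stirling n k \<le> (\<Sum>i\<le>n. stirling n i)"
    using True by (intro member_le_sum) auto
  then show ?thesis by (simp add: sum_stirling)
next
  case False then show ?thesis by simp
qed

lemma cc_nonneg: "cc j m \<ge> 0" by (simp add: cc_def)

lemma cc_bound: "\<bar>cc j m\<bar> \<le> 1 / fact m"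
proof -
  have "real (stirling m j) \<le> fact m"
    using stirling_le_fact[of m j] by (metis of_nat_fact of_nat_le_iff)
  then have "real (stirling m j) / (fact m)^2 \<le> fact m / (fact m)^2"
    by (intro divide_right_mono) auto
  also have "\<dots> = 1 / fact m" by (simp add: power2_eq_square)
  finally show ?thesis by (simp add: cc_def)
qed

lemma cc_summable: "summable (\<lambda>m. cc j m * x^m)"
proof (rule summable_comparison_test'[where g="\<lambda>m. \<bar>x\<bar>^m / fact m"])
  show "summable (\<lambda>m. \<bar>x\<bar>^m / fact m)" using summable_exp[of "\<bar>x\<bar>"] by (simp add: field_simps)
  fix m
  have "norm (cc j m * x^m) = \<bar>cc j m\<bar> * \<bar>x\<bar>^m" by (simp add: abs_mult power_abs)
  also have "\<dots> \<le> (1 / fact m) * \<bar>x\<bar>^m" by (intro mult_right_mono cc_bound) auto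
  finally show "norm (cc j m * x^m) \<le> \<bar>x\<bar>^m / fact m" by simp
qed

lemma cc_summable_all: "\<forall>x. summable (\<lambda>m. cc j m * x^m)"
  using cc_summable by blast

definition DD :: "nat \<Rightarrow> real \<Rightarrow> real" where
  "DD j x = (\<Sum>m. diffs (cc j) m * x^m)"
definition DD2 :: "nat \<Rightarrow> real \<Rightarrow> real" where
  "DD2 j x = (\<Sum>m. diffs (diffs (cc j)) m * x^m)"

lemma dcc_summable: "summable (\<lambda>m. diffs (cc j) m * x^m)"
  using termdiff_converges_all[of "cc j", OF cc_summable] by blast
lemma ddcc_summable: "summable (\<lambda>m. diffs (diffs (cc j)) m * x^m)"
  using termdiff_converges_all[of "diffs (cc j)"] dcc_summable by blast

lemma hh_deriv: "(hh j has_field_derivative DD j x) (at x)"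
  unfolding hh_def[abs_def] DD_def
  by (rule termdiffs_strong_converges_everywhere) (rule cc_summable)

lemma DD_deriv: "(DD j has_field_derivative DD2 j x) (at x)"
  unfolding DD_def[abs_def] DD2_def
  by (rule termdiffs_strong_converges_everywhere) (rule dcc_summable)

definition shiftc :: "(nat \<Rightarrow> real) \<Rightarrow> nat \<Rightarrow> real" where
  "shiftc b m = (case m of 0 \<Rightarrow> 0 | Suc n \<Rightarrow> b n)"

lemma shift_sums:
  assumes "(\<lambda>m. b m * x^m) sums S"
  shows "(\<lambda>m. shiftc b m * x^m) sums (x * S)"
proof -
  have "(\<lambda>n. x * (b n * x^n)) sums (x * S)" by (rule sums_mult[OF assms])
  then have "(\<lambda>n. shiftc b (Suc n) * x^(Suc n)) sums (x * S)"
    by (simp add: shiftc_def algebra_simps)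
  then show ?thesis by (subst (asm) sums_Suc_iff) (simp add: shiftc_def)
qed

lemma shift_suminf:
  assumes "summable (\<lambda>m. b m * x^m)"
  shows "x * (\<Sum>m. b m * x^m) = (\<Sum>m. shiftc b m * x^m)"
  using shift_sums[OF summable_sums[OF assms]] by (simp add: sums_iff)

lemma shift_summable:
  assumes "summable (\<lambda>m. b m * x^m)"
  shows "summable (\<lambda>m. shiftc b m * x^m)"
  using shift_sums[OF summable_sums[OF assms]] by (simp add: sums_iff)

lemma fact_Suc_sq: "(fact (Suc m) :: real)^2 = (real (Suc m))^2 * (fact m)^2"
  by (simp add: power_mult_distrib)

lemma coef_main: "real (Suc m)^2 * cc (Suc j) (Suc m) - real m * cc (Suc j) m = cc j m"
proof -
  have "real (Suc m)^2 * cc (Suc j) (Suc m) = real (stirling (Suc m) (Suc j)) / (fact m)^2"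
    unfolding cc_def fact_Suc_sq by (simp add: field_simps)
  also have "\<dots> = (real m * real (stirling m (Suc j)) + real (stirling m j)) / (fact m)^2"
    by simp
  finally show ?thesis by (simp add: cc_def field_simps)
qed

lemma DD_identity: "DD (Suc j) x + x * DD2 (Suc j) x - x * DD (Suc j) x = hh j x"
proof -
  let ?c = "cc (Suc j)"
  have 1: "x * DD2 (Suc j) x = (\<Sum>m. shiftc (diffs (diffs ?c)) m * x^m)"
    unfolding DD2_def by (rule shift_suminf[OF ddcc_summable])
  have 2: "x * DD (Suc j) x = (\<Sum>m. shiftc (diffs ?c) m * x^m)"
    unfolding DD_def by (rule shift_suminf[OF dcc_summable])
  have s1: "summable (\<lambda>m. shiftc (diffs (diffs ?c)) m * x^m)"
    by (rule shift_summable[OF ddcc_summable])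
  have s2: "summable (\<lambda>m. shiftc (diffs ?c) m * x^m)"
    by (rule shift_summable[OF dcc_summable])
  have "DD (Suc j) x + x * DD2 (Suc j) x - x * DD (Suc j) x =
     (\<Sum>m. diffs ?c m * x^m + shiftc (diffs (diffs ?c)) m * x^m - shiftc (diffs ?c) m * x^m)"
    unfolding 1 2 unfolding DD_def
    by (subst suminf_diff[OF summable_add[OF dcc_summable s1] s2, symmetric])
       (simp add: suminf_add[OF dcc_summable s1])
  also have "\<dots> = (\<Sum>m. cc j m * x^m)"
  proof (rule suminf_cong)
    fix m
    have "diffs ?c m + shiftc (diffs (diffs ?c)) m - shiftc (diffs ?c) m = cc j m"
    proof (cases m)
      case 0
      then show ?thesis by (simp add: diffs_def shiftc_def cc_def)
    next
      case (Suc n)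
      have "diffs ?c m + shiftc (diffs (diffs ?c)) m - shiftc (diffs ?c) m
          = real (Suc m)^2 * ?c (Suc m) - real m * ?c m"
        using Suc by (simp add: diffs_def shiftc_def power2_eq_square algebra_simps)
      then show ?thesis using coef_main by simp
    qed
    note eqm = this
    show "diffs ?c m * x^m + shiftc (diffs (diffs ?c)) m * x^m - shiftc (diffs ?c) m * x^m
        = cc j m * x^m" using arg_cong[where f="\<lambda>z. z * x^m", OF eqm] by (simp add: algebra_simps)
  qed
  finally show ?thesis by (simp add: hh_def)
qed

definition Gqc :: "nat \<Rightarrow> nat \<Rightarrow> real" where "Gqc j m = cc j m / (real m + 1)"
definition Gq :: "nat \<Rightarrow> real \<Rightarrow> real" where "Gq j x = (\<Sum>m. Gqc j m * x^m)"
definition GG :: "nat \<Rightarrow> real \<Rightarrow> real" where "GG j x = (\<Sum>m. shiftc (Gqc j) m * x^m)"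

lemma Gqc_summable: "summable (\<lambda>m. Gqc j m * x^m)"
proof (rule summable_comparison_test'[where g="\<lambda>m. cc j m * \<bar>x\<bar>^m"])
  show "summable (\<lambda>m. cc j m * \<bar>x\<bar>^m)" by (rule cc_summable)
  fix m
  have "norm (Gqc j m * x^m) = Gqc j m * \<bar>x\<bar>^m"
    by (simp add: abs_mult power_abs Gqc_def cc_nonneg)
  also have "\<dots> \<le> cc j m * \<bar>x\<bar>^m"
  proof (intro mult_right_mono)
    have "cc j m * 1 \<le> cc j m * (real m + 1)" by (rule mult_left_mono) (auto simp: cc_nonneg)
    then show "Gqc j m \<le> cc j m" by (simp add: Gqc_def divide_le_eq)
  qed simp
  finally show "norm (Gqc j m * x^m) \<le> cc j m * \<bar>x\<bar>^m" .
qed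

lemma GG_summable: "summable (\<lambda>m. shiftc (Gqc j) m * x^m)"
  by (rule shift_summable[OF Gqc_summable])

lemma GG_eq: "GG j x = x * Gq j x"
  unfolding GG_def Gq_def by (rule shift_suminf[OF Gqc_summable, symmetric])

lemma diffs_GG: "diffs (shiftc (Gqc j)) = cc j"
  by (rule ext) (simp add: diffs_def shiftc_def Gqc_def field_simps)

lemma GG_deriv: "(GG j has_field_derivative hh j x) (at x)"
proof -
  have "((\<lambda>x. \<Sum>m. shiftc (Gqc j) m * x^m) has_field_derivative (\<Sum>m. diffs (shiftc (Gqc j)) m * x^m)) (at x)"
    by (rule termdiffs_strong_converges_everywhere) (rule GG_summable)
  then show ?thesis unfolding diffs_GG GG_def[abs_def] hh_def .
qed

lemma Gq_deriv_ex: "\<exists>d. (Gq j has_field_derivative d) (at x)"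
  unfolding Gq_def[abs_def]
  by (rule exI, rule termdiffs_strong_converges_everywhere) (rule Gqc_summable)

lemma coef_R: "(\<Sum>i<Suc j. diffs (cc i) m - cc i m) = - Gqc j m"
proof (induction j)
  case 0
  show ?case by (cases m) (auto simp: diffs_def cc_def Gqc_def)
next
  case (Suc j)
  have "(\<Sum>i<Suc (Suc j). diffs (cc i) m - cc i m)
      = - Gqc j m + (real (Suc m) * cc (Suc j) (Suc m) - cc (Suc j) m)"
    using Suc by (simp add: diffs_def)
  also have "\<dots> = - Gqc (Suc j) m"
  proof -
    have e: "real (Suc m)^2 * cc (Suc j) (Suc m) = cc j m + real m * cc (Suc j) m"
      using coef_main[of m j] by linarith
    have "(real m + 1) * (- Gqc j m + (real (Suc m) * cc (Suc j) (Suc m) - cc (Suc j) m))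
        = - cc j m + real (Suc m)^2 * cc (Suc j) (Suc m) - (real m + 1) * cc (Suc j) m"
      by (simp add: Gqc_def field_simps power2_eq_square)
    also have "\<dots> = (real m + 1) * (- Gqc (Suc j) m)"
      unfolding e by (simp add: Gqc_def field_simps)
    finally have c: "(real m + 1) * (- Gqc j m + (real (Suc m) * cc (Suc j) (Suc m) - cc (Suc j) m)) = (real m + 1) * (- Gqc (Suc j) m)" .
    have "real m + 1 \<noteq> 0" by simp
    then show ?thesis using c by (subst (asm) mult_left_cancel) auto
  qed
  finally show ?case .
qed

definition Rsum :: "nat \<Rightarrow> real \<Rightarrow> real" where "Rsum k x = (\<Sum>i<k. hh i x)"

lemma Rsum_identity: "(\<Sum>i<Suc j. DD i x) - Rsum (Suc j) x = - Gq j x"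
proof -
  have "(\<Sum>i<Suc j. DD i x) - Rsum (Suc j) x = (\<Sum>i<Suc j. DD i x - hh i x)"
    by (simp add: Rsum_def sum_subtractf)
  also have "\<dots> = (\<Sum>i<Suc j. \<Sum>m. diffs (cc i) m * x^m - cc i m * x^m)"
    by (intro sum.cong refl) (simp add: DD_def hh_def suminf_diff[OF dcc_summable cc_summable])
  also have "\<dots> = (\<Sum>m. \<Sum>i<Suc j. diffs (cc i) m * x^m - cc i m * x^m)"
    by (rule suminf_sum[symmetric]) (intro summable_diff dcc_summable cc_summable)
  also have "\<dots> = (\<Sum>m. - Gqc j m * x^m)"
  proof (rule suminf_cong)
    fix m
    have "(\<Sum>i<Suc j. diffs (cc i) m * x^m - cc i m * x^m) = (\<Sum>i<Suc j. diffs (cc i) m - cc i m) * x^m"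
      by (simp only: sum_distrib_right left_diff_distrib)
    also have "\<dots> = - Gqc j m * x^m" by (simp only: coef_R)
    finally show "(\<Sum>i<Suc j. diffs (cc i) m * x^m - cc i m * x^m) = - Gqc j m * x^m" .
  qed
  also have "\<dots> = - Gq j x"
    unfolding Gq_def using suminf_minus[OF Gqc_summable, of j x] by simp
  finally show ?thesis .
qed

lemma Rsum_deriv: "(Rsum k has_field_derivative (\<Sum>i<k. DD i x)) (at x)"
  unfolding Rsum_def[abs_def] by (intro DERIV_sum hh_deriv)

lemma R_deriv: "((\<lambda>x. exp (-x) * Rsum (Suc j) x) has_field_derivative (- exp (-x) * Gq j x)) (at x)"
proof -
  have e: "((\<lambda>x. exp (-x)) has_field_derivative exp (-x) * (-1)) (at x)"
    by (auto intro!: derivative_eq_intros)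
  have "((\<lambda>x. exp (-x) * Rsum (Suc j) x) has_field_derivative
      (exp (-x) * (-1) * Rsum (Suc j) x + (\<Sum>i<Suc j. DD i x) * exp (-x))) (at x)"
    by (rule DERIV_mult[OF e Rsum_deriv])
  also have "exp (-x) * (-1) * Rsum (Suc j) x + (\<Sum>i<Suc j. DD i x) * exp (-x)
      = exp (-x) * ((\<Sum>i<Suc j. DD i x) - Rsum (Suc j) x)" by (simp add: algebra_simps)
  also have "\<dots> = - exp (-x) * Gq j x" by (subst Rsum_identity) simp
  finally show ?thesis .
qed

lemma hh_nonneg: "x \<ge> 0 \<Longrightarrow> hh j x \<ge> 0"
  unfolding hh_def by (intro suminf_nonneg cc_summable) (simp add: cc_nonneg)
lemma DD_nonneg: "x \<ge> 0 \<Longrightarrow> DD j x \<ge> 0"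
  unfolding DD_def by (intro suminf_nonneg dcc_summable) (simp add: cc_nonneg diffs_def)
lemma Gq_nonneg: "x \<ge> 0 \<Longrightarrow> Gq j x \<ge> 0"
  unfolding Gq_def by (intro suminf_nonneg Gqc_summable) (simp add: cc_nonneg Gqc_def)
lemma GG_nonneg: "x \<ge> 0 \<Longrightarrow> GG j x \<ge> 0"
  by (simp add: GG_eq Gq_nonneg)

lemma hh_Suc_0: "hh (Suc j) 0 = 0"
  unfolding hh_def by (subst powser_zero) (simp add: cc_def)
lemma hh_0_0: "hh 0 0 = 1"
  unfolding hh_def by (subst powser_zero) (simp add: cc_def)
lemma GG_0: "GG j 0 = 0"
  by (simp add: GG_eq)
lemma Rsum_0: "Rsum (Suc j) 0 = 1"
  unfolding Rsum_def by (induction j) (simp_all add: hh_0_0 hh_Suc_0)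

lemma cont_hh: "continuous_on A (hh j)"
  using hh_deriv by (metis DERIV_isCont continuous_at_imp_continuous_on)
lemma cont_DD: "continuous_on A (DD j)"
  using DD_deriv by (metis DERIV_isCont continuous_at_imp_continuous_on)
lemma cont_GG: "continuous_on A (GG j)"
  using GG_deriv by (metis DERIV_isCont continuous_at_imp_continuous_on)
lemma cont_Gq: "continuous_on A (Gq j)"
  using Gq_deriv_ex by (metis DERIV_isCont continuous_at_imp_continuous_on)

lemma meas_hh[measurable]: "hh j \<in> borel_measurable borel"
  by (intro borel_measurable_continuous_onI cont_hh)
lemma meas_DD[measurable]: "DD j \<in> borel_measurable borel"
  by (intro borel_measurable_continuous_onI cont_DD)
lemma meas_GG[measurable]: "GG j \<in> borel_measurable borel"
  by (intro borel_measurable_continuous_onI cont_GG)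
lemma meas_Gq[measurable]: "Gq j \<in> borel_measurable borel"
  by (intro borel_measurable_continuous_onI cont_Gq)

lemma pfun_eq: "pfun j x = exp (-x) * hh j x"
proof -
  have "hh j x = (\<Sum>n. cc j (n + j) * x^(n + j)) + (\<Sum>i<j. cc j i * x^i)"
    unfolding hh_def by (rule suminf_split_initial_segment[OF cc_summable])
  also have "(\<Sum>i<j. cc j i * x^i) = 0"
    by (intro sum.neutral) (simp add: cc_def)
  finally have "hh j x = (\<Sum>n. cc j (n + j) * x^(n + j))" by simp
  also have "\<dots> = (\<Sum>n. x ^ (n + j) / fact (n + j) * real (stirling (n + j) j) / fact (n + j))"
    by (intro suminf_cong) (simp add: cc_def power2_eq_square field_simps)
  finally show ?thesis by (simp add: pfun_def)
qed

lemma hh_0: "hh 0 x = 1"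
proof -
  have "(\<lambda>m. cc 0 m * x^m) = (\<lambda>m. if m = 0 then (\<lambda>_. 1::real) m else 0)"
    by (rule ext) (simp add: cc_def)
  then show ?thesis unfolding hh_def using sums_single[of 0 "\<lambda>_. 1::real"] by (simp add: sums_iff)
qed



lemma DD_chain: "((\<lambda>t. DD k (t * a)) has_field_derivative DD2 k (t * a) * a) (at t)"
proof -
  have "((\<lambda>t. t * a) has_field_derivative a) (at t)" by (auto intro!: derivative_eq_intros)
  from DERIV_chain2[where f="DD k" and g="\<lambda>t. t * a", OF DD_deriv this] show ?thesis by simp
qed

lemma hh_chain: "((\<lambda>p. hh k (y * (1 - p))) has_field_derivative DD k (y * (1 - p)) * (- y)) (at p)"
proof -
  have "((\<lambda>p. y * (1 - p)) has_field_derivative - y) (at p)" by (auto intro!: derivative_eq_intros)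
  from DERIV_chain2[where f="hh k" and g="\<lambda>p. y * (1 - p)", OF hh_deriv this] show ?thesis by simp
qed

lemma GG_chain: "((\<lambda>p. GG k (t * (1 - p))) has_field_derivative hh k (t * (1 - p)) * (- t)) (at p)"
proof -
  have "((\<lambda>p. t * (1 - p)) has_field_derivative - t) (at p)" by (auto intro!: derivative_eq_intros)
  from DERIV_chain2[where f="GG k" and g="\<lambda>p. t * (1 - p)", OF GG_deriv this] show ?thesis by simp
qed

lemma T_int:
  assumes "y \<ge> 0" "p \<le> 1"
  shows "(\<integral>\<^sup>+t. ennreal (exp (-(t*(1-p))) * hh j (t*(1-p))) * indicator {0..y} t \<partial>lborel)
       = ennreal (y * exp (-(y*(1-p))) * DD (Suc j) (y*(1-p)))"
proof -
  define a where "a = 1 - p"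
  have a: "a \<ge> 0" using assms by (simp add: a_def)
  have D: "((\<lambda>t. t * exp (-(t*a)) * DD (Suc j) (t*a)) has_field_derivative
      exp (-(t*a)) * hh j (t*a)) (at t)" for t
  proof -
    have e: "((\<lambda>t. exp (-(t*a))) has_field_derivative exp (-(t*a)) * (- a)) (at t)"
      by (auto intro!: derivative_eq_intros)
    have "((\<lambda>t. t * exp (-(t*a)) * DD (Suc j) (t*a)) has_field_derivative
      ((1 * exp (-(t*a)) + exp (-(t*a)) * (- a) * t) * DD (Suc j) (t*a) + DD2 (Suc j) (t*a) * a * (t * exp (-(t*a))))) (at t)"
      by (intro DERIV_mult DD_chain e DERIV_ident)
    also have "(1 * exp (-(t*a)) + exp (-(t*a)) * (- a) * t) * DD (Suc j) (t*a) + DD2 (Suc j) (t*a) * a * (t * exp (-(t*a)))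
       = exp (-(t*a)) * (DD (Suc j) (t*a) + (t*a) * DD2 (Suc j) (t*a) - (t*a) * DD (Suc j) (t*a))"
      by (simp add: algebra_simps)
    also have "\<dots> = exp (-(t*a)) * hh j (t*a)" by (simp only: DD_identity)
    finally show ?thesis .
  qed
  have "(\<integral>\<^sup>+t. ennreal (exp (-(t*a)) * hh j (t*a)) * indicator {0..y} t \<partial>lborel)
      = ennreal (y * exp (-(y*a)) * DD (Suc j) (y*a) - 0 * exp (-(0*a)) * DD (Suc j) (0*a))"
    by (rule nn_integral_FTC_Icc[OF _ D]) (use assms a in \<open>auto intro!: hh_nonneg mult_nonneg_nonneg\<close>)
  then show ?thesis by (simp add: a_def)
qed

lemma P_int:
  assumes "y \<ge> 0" "q \<le> 1"
  shows "(\<integral>\<^sup>+p. ennreal (y * exp (-y) * DD k (y*(1-p))) * indicator {q..1} p \<partial>lborel)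
       = ennreal (exp (-y) * (hh k (y*(1-q)) - hh k 0))"
proof -
  have D: "((\<lambda>p. - exp (-y) * hh k (y*(1-p))) has_field_derivative y * exp (-y) * DD k (y*(1-p))) (at p)" for p
    using DERIV_cmult[OF hh_chain[of k y p], of "- exp (-y)"] by (simp add: algebra_simps)
  have "(\<integral>\<^sup>+p. ennreal (y * exp (-y) * DD k (y*(1-p))) * indicator {q..1} p \<partial>lborel)
      = ennreal (- exp (-y) * hh k (y*(1-1)) - (- exp (-y) * hh k (y*(1-q))))"
    by (rule nn_integral_FTC_Icc[OF _ D]) (use assms in \<open>auto intro!: DD_nonneg mult_nonneg_nonneg\<close>)
  then show ?thesis by (simp add: algebra_simps)
qed

lemma S_int:
  assumes "0 \<le> s" "s \<le> t" "0 < t"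
  shows "(\<integral>\<^sup>+p. ennreal (exp (-t) * hh j (t*(1-p))) * indicator {0..1-s/t} p \<partial>lborel)
       = ennreal (exp (-t) * (GG j t - GG j s) / t)"
proof -
  have D: "((\<lambda>p. - exp (-t) / t * GG j (t*(1-p))) has_field_derivative exp (-t) * hh j (t*(1-p))) (at p)" for p
    using DERIV_cmult[OF GG_chain[of j t p], of "- exp (-t) / t"] assms by (simp add: algebra_simps)
  have "(\<integral>\<^sup>+p. ennreal (exp (-t) * hh j (t*(1-p))) * indicator {0..1-s/t} p \<partial>lborel)
      = ennreal (- exp (-t) / t * GG j (t*(1-(1-s/t))) - (- exp (-t) / t * GG j (t*(1-0))))"
  proof (rule nn_integral_FTC_Icc[OF _ D])
    fix p assume p: "p \<in> {0..1-s/t}"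
    have "s / t \<ge> 0" using assms by simp
    then have "1 - p \<ge> 0" using p by auto
    then show "0 \<le> exp (-t) * hh j (t*(1-p))" using assms by (auto intro!: hh_nonneg mult_nonneg_nonneg)
  next
    show "0 \<le> 1 - s / t" using assms by (simp add: field_simps)
  qed simp
  also have "t*(1-(1-s/t)) = s" using assms by (simp add: field_simps)
  also have "- exp (-t) / t * GG j s - (- exp (-t) / t * GG j (t*(1-0))) = exp (-t) * (GG j t - GG j s) / t"
    using assms by (simp add: field_simps)
  finally show ?thesis .
qed

lemma R_int:
  assumes "0 \<le> s"
  shows "(\<integral>\<^sup>+t. ennreal (exp (-t) * Gq j t) * indicator {0..s} t \<partial>lborel)
       = ennreal (1 - exp (-s) * Rsum (Suc j) s)"
proof -
  have D: "((\<lambda>t. - (exp (-t) * Rsum (Suc j) t)) has_field_derivative exp (-t) * Gq j t) (at t)" for t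
    using DERIV_minus[OF R_deriv[of j t]] by simp
  have "(\<integral>\<^sup>+t. ennreal (exp (-t) * Gq j t) * indicator {0..s} t \<partial>lborel)
      = ennreal (- (exp (-s) * Rsum (Suc j) s) - (- (exp (-0) * Rsum (Suc j) 0)))"
    by (rule nn_integral_FTC_Icc[OF _ D]) (use assms in \<open>auto intro!: Gq_nonneg mult_nonneg_nonneg\<close>)
  then show ?thesis by (simp add: Rsum_0)
qed



definition fd :: "nat \<Rightarrow> real \<Rightarrow> real \<Rightarrow> ennreal" where
  "fd j t p = ennreal (exp (-t) * hh j (t*(1-p))) * indicator {0..} t * indicator {0..1} p"

definition Kk :: "real \<Rightarrow> real \<Rightarrow> real \<Rightarrow> real \<Rightarrow> ennreal" where
  "Kk t p y q = ennreal (exp (-(p*(y-t)))) * indicator {..y} t * indicator {0..p} q"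

lemma REC:
  "(\<integral>\<^sup>+p. \<integral>\<^sup>+t. fd j t p * Kk t p y q \<partial>lborel \<partial>lborel) = fd (Suc j) y q"
proof (cases "y \<ge> 0 \<and> 0 \<le> q \<and> q \<le> 1")
  case False
  have z: "fd j t p * Kk t p y q = 0" for t p
    using False by (auto simp: fd_def Kk_def indicator_def)
  have "fd (Suc j) y q = 0" using False by (auto simp: fd_def indicator_def)
  then show ?thesis by (simp only: z nn_integral_0_iff_AE) simp
next
  case True
  then have y: "y \<ge> 0" and q: "0 \<le> q" "q \<le> 1" by auto
  have inner: "(\<integral>\<^sup>+t. fd j t p * Kk t p y q \<partial>lborel)
      = ennreal (y * exp (-y) * DD (Suc j) (y*(1-p))) * indicator {q..1} p" for p
  proof (cases "q \<le> p \<and> p \<le> 1")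
    case False
    then have z: "fd j t p * Kk t p y q = 0" for t
      using q by (auto simp: fd_def Kk_def indicator_def)
    have "(\<integral>\<^sup>+t. fd j t p * Kk t p y q \<partial>lborel) = 0" by (simp only: z) simp
    then show ?thesis using False by (simp add: indicator_def)
  next
    case True
    then have p: "0 \<le> p" "p \<le> 1" "q \<le> p" using q by auto
    have "fd j t p * Kk t p y q = ennreal (exp (-(p*y))) *
        (ennreal (exp (-(t*(1-p))) * hh j (t*(1-p))) * indicator {0..y} t)" for t
    proof (cases "0 \<le> t \<and> t \<le> y")
      case True
      have "exp (-t) * hh j (t*(1-p)) * exp (-(p*(y-t))) = exp (-(p*y)) * (exp (-(t*(1-p))) * hh j (t*(1-p)))"
        by (simp add: algebra_simps flip: exp_add)
      moreover have "hh j (t*(1-p)) \<ge> 0" using True p by (intro hh_nonneg) auto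
      ultimately show ?thesis using True p q
        by (simp add: fd_def Kk_def indicator_def ennreal_mult'[symmetric] mult.assoc flip: ennreal_mult)
    next
      case False
      then show ?thesis by (auto simp: fd_def Kk_def indicator_def)
    qed
    then have "(\<integral>\<^sup>+t. fd j t p * Kk t p y q \<partial>lborel) = ennreal (exp (-(p*y))) *
        (\<integral>\<^sup>+t. ennreal (exp (-(t*(1-p))) * hh j (t*(1-p))) * indicator {0..y} t \<partial>lborel)"
      by (simp add: nn_integral_cmult)
    also have "\<dots> = ennreal (exp (-(p*y))) * ennreal (y * exp (-(y*(1-p))) * DD (Suc j) (y*(1-p)))"
      using y p by (simp add: T_int)
    also have "\<dots> = ennreal (y * exp (-y) * DD (Suc j) (y*(1-p)))"
    proof -
      have e1: "exp (-(p*y)) * (y * exp (-(y*(1-p))) * DD (Suc j) (y*(1-p))) = y * exp (-y) * DD (Suc j) (y*(1-p))"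
        by (simp add: algebra_simps flip: exp_add)
      have nn: "0 \<le> y * exp (-(y*(1-p))) * DD (Suc j) (y*(1-p))"
        using y p by (auto intro!: mult_nonneg_nonneg DD_nonneg)
      have "ennreal (exp (-(p*y))) * ennreal (y * exp (-(y*(1-p))) * DD (Suc j) (y*(1-p)))
          = ennreal (exp (-(p*y)) * (y * exp (-(y*(1-p))) * DD (Suc j) (y*(1-p))))"
        using nn by (simp add: ennreal_mult)
      then show ?thesis by (simp only: e1)
    qed
    finally show ?thesis using True by (simp add: indicator_def)
  qed
  have "(\<integral>\<^sup>+p. \<integral>\<^sup>+t. fd j t p * Kk t p y q \<partial>lborel \<partial>lborel)
      = (\<integral>\<^sup>+p. ennreal (y * exp (-y) * DD (Suc j) (y*(1-p))) * indicator {q..1} p \<partial>lborel)"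
    by (simp add: inner)
  also have "\<dots> = ennreal (exp (-y) * (hh (Suc j) (y*(1-q)) - hh (Suc j) 0))"
    using y q by (simp add: P_int)
  also have "\<dots> = fd (Suc j) y q"
    using y q by (simp add: fd_def hh_Suc_0)
  finally show ?thesis .
qed



lemma meas_fd[measurable]: "(\<lambda>x. fd j (T x) (P x)) \<in> borel_measurable N"
  if [measurable]: "T \<in> borel_measurable N" "P \<in> borel_measurable N"
  unfolding fd_def by measurable

lemma meas_Kk[measurable]: "(\<lambda>x. Kk (T x) (P x) (Y x) (Q x)) \<in> borel_measurable N"
  if [measurable]: "T \<in> borel_measurable N" "P \<in> borel_measurable N"
     "Y \<in> borel_measurable N" "Q \<in> borel_measurable N"
proof -
  have "Kk (T x) (P x) (Y x) (Q x) = (if T x \<le> Y x \<and> 0 \<le> Q x \<and> Q x \<le> P x then ennreal (exp (-(P x * (Y x - T x)))) else 0)" for x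
    by (simp add: Kk_def indicator_def)
  then show ?thesis by simp
qed

lemma SUB_E:
  fixes G :: "real \<Rightarrow> ennreal"
  assumes [measurable]: "G \<in> borel_measurable borel" and p: "p > 0"
  shows "(\<integral>\<^sup>+e. G (t + e/p) * ennreal (exp (-e)) * indicator {0..} e \<partial>lborel)
       = (\<integral>\<^sup>+y. G y * (if t \<le> y then ennreal (p * exp (-(p*(y-t)))) else 0) \<partial>lborel)"
proof -
  define f where "f y = G y * (if t \<le> y then ennreal (p * exp (-(p*(y-t)))) else 0)" for y
  have [measurable]: "f \<in> borel_measurable borel" unfolding f_def by measurable
  have fx: "f (t + (1/p) * x) = ennreal p * (G (t + x/p) * ennreal (exp (-x)) * indicator {0..} x)" for x
    using p by (simp add: f_def indicator_def field_simps ennreal_mult)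
  have "(\<integral>\<^sup>+y. f y \<partial>lborel) = ennreal \<bar>1/p\<bar> * (\<integral>\<^sup>+x. f (t + (1/p) * x) \<partial>lborel)"
    by (rule nn_integral_real_affine) (use p in auto)
  also have "\<dots> = ennreal (1/p) * (ennreal p * (\<integral>\<^sup>+x. G (t + x/p) * ennreal (exp (-x)) * indicator {0..} x \<partial>lborel))"
    unfolding fx using p by (simp add: nn_integral_cmult)
  also have "\<dots> = (\<integral>\<^sup>+x. G (t + x/p) * ennreal (exp (-x)) * indicator {0..} x \<partial>lborel)"
    using p by (simp add: mult.assoc[symmetric] ennreal_mult[symmetric])
  finally show ?thesis unfolding f_def by simp
qed

lemma SUB_U:
  fixes G :: "real \<Rightarrow> ennreal"
  assumes [measurable]: "G \<in> borel_measurable borel" and p: "p > 0"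
  shows "(\<integral>\<^sup>+u. G (p*u) * indicator {0..1} u \<partial>lborel)
       = (\<integral>\<^sup>+q. G q * (if 0 \<le> q \<and> q \<le> p then ennreal (1/p) else 0) \<partial>lborel)"
proof -
  define f where "f q = G q * (if 0 \<le> q \<and> q \<le> p then ennreal (1/p) else 0)" for q
  have [measurable]: "f \<in> borel_measurable borel" unfolding f_def by measurable
  have fx: "f (0 + p * x) = ennreal (1/p) * (G (p*x) * indicator {0..1} x)" for x
    using p by (auto simp: f_def indicator_def zero_le_mult_iff mult_le_cancel_left1 mult.commute)
  have "(\<integral>\<^sup>+q. f q \<partial>lborel) = ennreal \<bar>p\<bar> * (\<integral>\<^sup>+x. f (0 + p * x) \<partial>lborel)"
    by (rule nn_integral_real_affine) (use p in auto)
  also have "\<dots> = ennreal p * (ennreal (1/p) * (\<integral>\<^sup>+x. G (p*x) * indicator {0..1} x \<partial>lborel))"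
    unfolding fx using p by (simp add: nn_integral_cmult)
  also have "\<dots> = (\<integral>\<^sup>+x. G (p*x) * indicator {0..1} x \<partial>lborel)"
    using p by (simp add: mult.assoc[symmetric] ennreal_mult[symmetric])
  finally show ?thesis unfolding f_def by simp
qed

definition Hf :: "(real \<times> real \<Rightarrow> ennreal) \<Rightarrow> real \<Rightarrow> real \<Rightarrow> ennreal" where
  "Hf g t p = (\<integral>\<^sup>+e. \<integral>\<^sup>+u. g (t + e/p, p*u) * ennreal (exp (-e)) * indicator {0..} e * indicator {0..1} u \<partial>lborel \<partial>lborel)"

lemma Hf_pos:
  fixes g :: "real \<times> real \<Rightarrow> ennreal"
  assumes [measurable]: "g \<in> borel_measurable borel" and p: "p > 0"
  shows "Hf g t p = (\<integral>\<^sup>+y. \<integral>\<^sup>+q. g (y,q) * Kk t p y q \<partial>lborel \<partial>lborel)"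
proof -
  define \<Phi> where "\<Phi> y = (\<integral>\<^sup>+q. g (y,q) * (if 0 \<le> q \<and> q \<le> p then ennreal (1/p) else 0) \<partial>lborel)" for y
  have [measurable]: "\<Phi> \<in> borel_measurable borel" unfolding \<Phi>_def by measurable
  have "Hf g t p = (\<integral>\<^sup>+e. ennreal (exp (-e)) * indicator {0..} e * (\<integral>\<^sup>+u. g (t + e/p, p*u) * indicator {0..1} u \<partial>lborel) \<partial>lborel)"
    unfolding Hf_def
    by (intro nn_integral_cong) (simp add: nn_integral_cmult[symmetric] mult_ac)
  also have "\<dots> = (\<integral>\<^sup>+e. \<Phi> (t + e/p) * ennreal (exp (-e)) * indicator {0..} e \<partial>lborel)"
    unfolding \<Phi>_def
    by (intro nn_integral_cong, subst SUB_U[OF _ p]) (simp_all add: mult_ac)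
  also have "\<dots> = (\<integral>\<^sup>+y. \<Phi> y * (if t \<le> y then ennreal (p * exp (-(p*(y-t)))) else 0) \<partial>lborel)"
    by (rule SUB_E[OF _ p]) simp
  also have "\<dots> = (\<integral>\<^sup>+y. \<integral>\<^sup>+q. g (y,q) * Kk t p y q \<partial>lborel \<partial>lborel)"
  proof (intro nn_integral_cong)
    fix y
    have "\<Phi> y * (if t \<le> y then ennreal (p * exp (-(p*(y-t)))) else 0)
       = (\<integral>\<^sup>+q. g (y,q) * (if 0 \<le> q \<and> q \<le> p then ennreal (1/p) else 0) * (if t \<le> y then ennreal (p * exp (-(p*(y-t)))) else 0) \<partial>lborel)"
      unfolding \<Phi>_def by (simp add: nn_integral_multc)
    also have "\<dots> = (\<integral>\<^sup>+q. g (y,q) * Kk t p y q \<partial>lborel)"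
    proof (intro nn_integral_cong)
      fix q
      have "ennreal (1/p) * ennreal (p * exp (-(p*(y-t)))) = ennreal (exp (-(p*(y-t))))"
        using p by (simp add: ennreal_mult[symmetric])
      then show "g (y,q) * (if 0 \<le> q \<and> q \<le> p then ennreal (1/p) else 0) * (if t \<le> y then ennreal (p * exp (-(p*(y-t)))) else 0) = g (y,q) * Kk t p y q"
        by (simp add: Kk_def indicator_def mult.assoc)
    qed
    finally show "\<Phi> y * (if t \<le> y then ennreal (p * exp (-(p*(y-t)))) else 0) = (\<integral>\<^sup>+q. g (y,q) * Kk t p y q \<partial>lborel)" .
  qed
  finally show ?thesis .
qed

lemma STEP:
  fixes g :: "real \<times> real \<Rightarrow> ennreal"
  assumes [measurable]: "g \<in> borel_measurable borel"
  shows "(\<integral>\<^sup>+t. \<integral>\<^sup>+p. Hf g t p * fd j t p \<partial>lborel \<partial>lborel)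
     = (\<integral>\<^sup>+t. \<integral>\<^sup>+p. g (t,p) * fd (Suc j) t p \<partial>lborel \<partial>lborel)"
proof -
  define F where "F t p y q = g (y,q) * (fd j t p * Kk t p y q)" for t p y q
  have [measurable]: "(\<lambda>x. F (T x) (P x) (Y x) (Q x)) \<in> borel_measurable N"
    if [measurable]: "T \<in> borel_measurable N" "P \<in> borel_measurable N"
     "Y \<in> borel_measurable N" "Q \<in> borel_measurable N" for T P Y Q and N :: "'b measure"
    unfolding F_def by measurable
  have "(\<integral>\<^sup>+t. \<integral>\<^sup>+p. Hf g t p * fd j t p \<partial>lborel \<partial>lborel)
      = (\<integral>\<^sup>+t. \<integral>\<^sup>+p. \<integral>\<^sup>+y. \<integral>\<^sup>+q. F t p y q \<partial>lborel \<partial>lborel \<partial>lborel \<partial>lborel)"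
  proof (rule nn_integral_cong, rule nn_integral_cong_AE)
    fix t
    show "AE p in lborel. Hf g t p * fd j t p = (\<integral>\<^sup>+y. \<integral>\<^sup>+q. F t p y q \<partial>lborel \<partial>lborel)"
      using AE_lborel_singleton[of 0]
    proof eventually_elim
      case (elim p)
      show ?case
      proof (cases "p > 0")
        case True
        have "fd j t p * (\<integral>\<^sup>+y. \<integral>\<^sup>+q. g (y,q) * Kk t p y q \<partial>lborel \<partial>lborel)
          = (\<integral>\<^sup>+y. fd j t p * (\<integral>\<^sup>+q. g (y,q) * Kk t p y q \<partial>lborel) \<partial>lborel)"
          by (rule nn_integral_cmult[symmetric]) measurable
        also have "\<dots> = (\<integral>\<^sup>+y. \<integral>\<^sup>+q. fd j t p * (g (y,q) * Kk t p y q) \<partial>lborel \<partial>lborel)"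
          by (intro nn_integral_cong nn_integral_cmult[symmetric]) measurable
        finally show ?thesis unfolding F_def Hf_pos[OF assms True]
          by (simp add: mult_ac)
      next
        case False
        then have "fd j t p = 0" using elim by (simp add: fd_def indicator_def)
        then show ?thesis by (simp add: F_def)
      qed
    qed
  qed
  also have "\<dots> = (\<integral>\<^sup>+t. \<integral>\<^sup>+y. \<integral>\<^sup>+p. \<integral>\<^sup>+q. F t p y q \<partial>lborel \<partial>lborel \<partial>lborel \<partial>lborel)"
    by (intro nn_integral_cong lborel_pair.Fubini') measurable
  also have "\<dots> = (\<integral>\<^sup>+t. \<integral>\<^sup>+y. \<integral>\<^sup>+q. \<integral>\<^sup>+p. F t p y q \<partial>lborel \<partial>lborel \<partial>lborel \<partial>lborel)"
    by (intro nn_integral_cong lborel_pair.Fubini') measurable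
  also have "\<dots> = (\<integral>\<^sup>+y. \<integral>\<^sup>+t. \<integral>\<^sup>+q. \<integral>\<^sup>+p. F t p y q \<partial>lborel \<partial>lborel \<partial>lborel \<partial>lborel)"
    by (intro lborel_pair.Fubini') measurable
  also have "\<dots> = (\<integral>\<^sup>+y. \<integral>\<^sup>+q. \<integral>\<^sup>+t. \<integral>\<^sup>+p. F t p y q \<partial>lborel \<partial>lborel \<partial>lborel \<partial>lborel)"
    by (intro nn_integral_cong lborel_pair.Fubini') measurable
  also have "\<dots> = (\<integral>\<^sup>+y. \<integral>\<^sup>+q. \<integral>\<^sup>+p. \<integral>\<^sup>+t. F t p y q \<partial>lborel \<partial>lborel \<partial>lborel \<partial>lborel)"
    by (intro nn_integral_cong lborel_pair.Fubini') measurable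
  also have "\<dots> = (\<integral>\<^sup>+y. \<integral>\<^sup>+q. g (y,q) * (\<integral>\<^sup>+p. \<integral>\<^sup>+t. fd j t p * Kk t p y q \<partial>lborel \<partial>lborel) \<partial>lborel \<partial>lborel)"
    unfolding F_def by (simp add: nn_integral_cmult)
  also have "\<dots> = (\<integral>\<^sup>+t. \<integral>\<^sup>+p. g (t,p) * fd (Suc j) t p \<partial>lborel \<partial>lborel)"
    by (simp add: REC)
  finally show ?thesis .
qed



lemma PAIR_INDEP:
  fixes X Y :: "'a \<Rightarrow> 'b"
  assumes P: "prob_space M" and ind: "prob_space.indep_var M S X T Y"
    and g[measurable]: "g \<in> borel_measurable (S \<Otimes>\<^sub>M T)"
  shows "(\<integral>\<^sup>+\<omega>. g (X \<omega>, Y \<omega>) \<partial>M) = (\<integral>\<^sup>+\<omega>. \<integral>\<^sup>+\<omega>'. g (X \<omega>, Y \<omega>') \<partial>M \<partial>M)"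
proof -
  interpret prob_space M by (rule P)
  have rv: "random_variable S X" "random_variable T Y"
    and eq: "distr M S X \<Otimes>\<^sub>M distr M T Y = distr M (S \<Otimes>\<^sub>M T) (\<lambda>x. (X x, Y x))"
    using ind unfolding indep_var_distribution_eq by auto
  note [measurable] = rv
  interpret T: prob_space "distr M T Y" by (rule prob_space_distr) (rule rv)
  have "(\<integral>\<^sup>+\<omega>. g (X \<omega>, Y \<omega>) \<partial>M) = (\<integral>\<^sup>+z. g z \<partial>distr M (S \<Otimes>\<^sub>M T) (\<lambda>x. (X x, Y x)))"
    by (subst nn_integral_distr) auto
  also have "\<dots> = (\<integral>\<^sup>+z. g z \<partial>(distr M S X \<Otimes>\<^sub>M distr M T Y))"
    by (simp add: eq)
  also have "\<dots> = (\<integral>\<^sup>+x. \<integral>\<^sup>+y. g (x,y) \<partial>distr M T Y \<partial>distr M S X)"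
    by (rule T.nn_integral_fst[symmetric]) simp
  also have "\<dots> = (\<integral>\<^sup>+\<omega>. \<integral>\<^sup>+y. g (X \<omega>,y) \<partial>distr M T Y \<partial>M)"
    by (subst nn_integral_distr) auto
  also have "\<dots> = (\<integral>\<^sup>+\<omega>. \<integral>\<^sup>+\<omega>'. g (X \<omega>, Y \<omega>') \<partial>M \<partial>M)"
    by (intro nn_integral_cong, subst nn_integral_distr) (auto simp: space_pair_measure)
  finally show ?thesis .
qed

definition Tk :: "(nat \<Rightarrow> 'a \<Rightarrow> real) \<Rightarrow> (nat \<Rightarrow> 'a \<Rightarrow> real) \<Rightarrow> nat \<Rightarrow> 'a \<Rightarrow> real" where
  "Tk E U k \<omega> = (\<Sum>i=1..k. E i \<omega> / (\<Prod>l=1..i-1. U l \<omega>))"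
definition Pk :: "(nat \<Rightarrow> 'a \<Rightarrow> real) \<Rightarrow> nat \<Rightarrow> 'a \<Rightarrow> real" where
  "Pk U k \<omega> = (\<Prod>l=1..k. U l \<omega>)"

lemma Tk_Suc: "Tk E U (Suc k) \<omega> = Tk E U k \<omega> + E (Suc k) \<omega> / Pk U k \<omega>"
  by (simp add: Tk_def Pk_def)
lemma Pk_Suc: "Pk U (Suc k) \<omega> = Pk U k \<omega> * U (Suc k) \<omega>"
  by (simp add: Pk_def)
lemma Tk_1: "Tk E U 1 \<omega> = E 1 \<omega>" by (simp add: Tk_def)
lemma Pk_1: "Pk U 1 \<omega> = U 1 \<omega>" by (simp add: Pk_def)

locale kset = prob_space M for M :: "'a measure" +
  fixes E U :: "nat \<Rightarrow> 'a \<Rightarrow> real"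
  assumes ind: "prob_space.indep_vars M (\<lambda>_. borel)
           (\<lambda>i. case i of Inl j \<Rightarrow> E j | Inr j \<Rightarrow> U j)
           (Inl ` {1..} \<union> Inr ` {1..})"
    and distE: "\<And>j. j \<ge> 1 \<Longrightarrow> distributed M lborel (E j) (exponential_density 1)"
    and distU: "\<And>j. j \<ge> 1 \<Longrightarrow> distr M lborel (U j) = uniform_measure lborel {0..1}"
begin

abbreviation "Xf \<equiv> (\<lambda>i. case i of Inl j \<Rightarrow> E j | Inr j \<Rightarrow> U j)"
abbreviation "II \<equiv> Inl ` {1..} \<union> Inr ` {1..} :: (nat + nat) set"

lemma rvE: "j \<ge> 1 \<Longrightarrow> E j \<in> borel_measurable M"
  using ind unfolding indep_vars_def by (auto dest!: bspec[where x="Inl j"])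
lemma rvU: "j \<ge> 1 \<Longrightarrow> U j \<in> borel_measurable M"
  using ind unfolding indep_vars_def by (auto dest!: bspec[where x="Inr j"])

lemma indep_EU: "j \<ge> 1 \<Longrightarrow> indep_var borel (E j) borel (U j)"
proof -
  assume j: "j \<ge> 1"
  have "indep_var (PiM {Inl j} (\<lambda>_. borel)) (\<lambda>\<omega>. restrict (\<lambda>i. Xf i \<omega>) {Inl j})
                  (PiM {Inr j} (\<lambda>_. borel)) (\<lambda>\<omega>. restrict (\<lambda>i. Xf i \<omega>) {Inr j})"
    by (rule indep_var_restrict[OF ind]) (use j in auto)
  then have "indep_var borel ((\<lambda>x. x (Inl j)) \<circ> (\<lambda>\<omega>. restrict (\<lambda>i. Xf i \<omega>) {Inl j}))
                  borel ((\<lambda>x. x (Inr j)) \<circ> (\<lambda>\<omega>. restrict (\<lambda>i. Xf i \<omega>) {Inr j}))"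
    by (rule indep_var_compose) (auto intro: measurable_component_singleton)
  moreover have "((\<lambda>x. x (Inl j)) \<circ> (\<lambda>\<omega>. restrict (\<lambda>i. Xf i \<omega>) {Inl j})) = E j"
    "((\<lambda>x. x (Inr j)) \<circ> (\<lambda>\<omega>. restrict (\<lambda>i. Xf i \<omega>) {Inr j})) = U j"
    by (auto simp: fun_eq_iff)
  ultimately show ?thesis by simp
qed

lemma indep_TP: "indep_var (borel \<Otimes>\<^sub>M borel) (\<lambda>\<omega>. (Tk E U (Suc k) \<omega>, Pk U (Suc k) \<omega>))
     (borel \<Otimes>\<^sub>M borel) (\<lambda>\<omega>. (E (Suc (Suc k)) \<omega>, U (Suc (Suc k)) \<omega>))"
proof -
  define A where "A = Inl ` {1..Suc k} \<union> Inr ` {1..Suc k}"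
  define B :: "(nat + nat) set" where "B = {Inl (Suc (Suc k)), Inr (Suc (Suc k))}"
  have "indep_var (PiM A (\<lambda>_. borel)) (\<lambda>\<omega>. restrict (\<lambda>i. Xf i \<omega>) A)
                  (PiM B (\<lambda>_. borel)) (\<lambda>\<omega>. restrict (\<lambda>i. Xf i \<omega>) B)"
    by (rule indep_var_restrict[OF ind]) (auto simp: A_def B_def)
  define fA where "fA x = ((\<Sum>i=1..Suc k. x (Inl i) / (\<Prod>l=1..i-1. x (Inr l))), (\<Prod>l=1..Suc k. x (Inr l)))"
    for x :: "nat + nat \<Rightarrow> real"
  define fB where "fB x = (x (Inl (Suc (Suc k))), x (Inr (Suc (Suc k))))" for x :: "nat + nat \<Rightarrow> real"
  have mA: "fA \<in> measurable (PiM A (\<lambda>_. borel)) (borel \<Otimes>\<^sub>M borel)"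
    unfolding fA_def
  proof (intro measurable_Pair borel_measurable_sum borel_measurable_prod borel_measurable_divide)
    fix i l assume "i \<in> {1..Suc k}" "l \<in> {1..i - 1}"
    then show "(\<lambda>x. x (Inr l)) \<in> borel_measurable (PiM A (\<lambda>_. borel))"
      by (intro measurable_component_singleton) (auto simp: A_def)
  next
    fix i assume "i \<in> {1..Suc k}"
    then show "(\<lambda>x. x (Inl i)) \<in> borel_measurable (PiM A (\<lambda>_. borel))"
      by (intro measurable_component_singleton) (auto simp: A_def)
  next
    fix l assume "l \<in> {1..Suc k}"
    then show "(\<lambda>x. x (Inr l)) \<in> borel_measurable (PiM A (\<lambda>_. borel))"
      by (intro measurable_component_singleton) (auto simp: A_def)
  qed
  have mB: "fB \<in> measurable (PiM B (\<lambda>_. borel)) (borel \<Otimes>\<^sub>M borel)"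
    unfolding fB_def
    by (intro measurable_Pair measurable_component_singleton) (auto simp: B_def)
  have "indep_var (borel \<Otimes>\<^sub>M borel) (fA \<circ> (\<lambda>\<omega>. restrict (\<lambda>i. Xf i \<omega>) A))
                  (borel \<Otimes>\<^sub>M borel) (fB \<circ> (\<lambda>\<omega>. restrict (\<lambda>i. Xf i \<omega>) B))"
    by (rule indep_var_compose[OF _ mA mB]) fact
  moreover have "fA \<circ> (\<lambda>\<omega>. restrict (\<lambda>i. Xf i \<omega>) A) = (\<lambda>\<omega>. (Tk E U (Suc k) \<omega>, Pk U (Suc k) \<omega>))"
    by (rule ext) (auto simp: fA_def A_def Tk_def Pk_def intro!: sum.cong prod.cong)
  moreover have "fB \<circ> (\<lambda>\<omega>. restrict (\<lambda>i. Xf i \<omega>) B) = (\<lambda>\<omega>. (E (Suc (Suc k)) \<omega>, U (Suc (Suc k)) \<omega>))"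
    by (rule ext) (auto simp: fB_def B_def)
  ultimately show ?thesis by simp
qed

lemma EU:
  fixes g :: "real \<times> real \<Rightarrow> ennreal"
  assumes j: "j \<ge> 1" and g[measurable]: "g \<in> borel_measurable (borel \<Otimes>\<^sub>M borel)"
  shows "(\<integral>\<^sup>+\<omega>. g (E j \<omega>, U j \<omega>) \<partial>M)
       = (\<integral>\<^sup>+e. \<integral>\<^sup>+u. g (e,u) * ennreal (exp (-e)) * indicator {0..} e * indicator {0..1} u \<partial>lborel \<partial>lborel)"
proof -
  note [measurable] = rvE[OF j] rvU[OF j]
  have "(\<integral>\<^sup>+\<omega>. g (E j \<omega>, U j \<omega>) \<partial>M) = (\<integral>\<^sup>+\<omega>. \<integral>\<^sup>+\<omega>'. g (E j \<omega>, U j \<omega>') \<partial>M \<partial>M)"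
    by (rule PAIR_INDEP[OF prob_space_axioms indep_EU[OF j] g])
  also have "\<dots> = (\<integral>\<^sup>+\<omega>. \<integral>\<^sup>+u. g (E j \<omega>, u) * indicator {0..1} u \<partial>lborel \<partial>M)"
  proof (intro nn_integral_cong)
    fix \<omega>
    have "(\<integral>\<^sup>+\<omega>'. g (E j \<omega>, U j \<omega>') \<partial>M) = (\<integral>\<^sup>+u. g (E j \<omega>, u) \<partial>distr M lborel (U j))"
      by (subst nn_integral_distr) auto
    also have "\<dots> = (\<integral>\<^sup>+u. g (E j \<omega>, u) \<partial>uniform_measure lborel {0..1})"
      by (simp add: distU[OF j])
    also have "\<dots> = (\<integral>\<^sup>+u. g (E j \<omega>, u) * indicator {0..1} u \<partial>lborel)"
      by (subst nn_integral_uniform_measure) (auto simp: divide_ennreal_def)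
    finally show "(\<integral>\<^sup>+\<omega>'. g (E j \<omega>, U j \<omega>') \<partial>M) = (\<integral>\<^sup>+u. g (E j \<omega>, u) * indicator {0..1} u \<partial>lborel)" .
  qed
  also have "\<dots> = (\<integral>\<^sup>+e. \<integral>\<^sup>+u. g (e, u) * indicator {0..1} u \<partial>lborel \<partial>distr M lborel (E j))"
    by (subst nn_integral_distr) auto
  also have "\<dots> = (\<integral>\<^sup>+e. \<integral>\<^sup>+u. g (e, u) * indicator {0..1} u \<partial>lborel \<partial>density lborel (exponential_density 1))"
    by (simp add: distributed_distr_eq_density[OF distE[OF j]])
  also have "\<dots> = (\<integral>\<^sup>+e. ennreal (exponential_density 1 e) * \<integral>\<^sup>+u. g (e, u) * indicator {0..1} u \<partial>lborel \<partial>lborel)"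
    by (subst nn_integral_density) auto
  also have "\<dots> = (\<integral>\<^sup>+e. \<integral>\<^sup>+u. g (e,u) * ennreal (exp (-e)) * indicator {0..} e * indicator {0..1} u \<partial>lborel \<partial>lborel)"
  proof (intro nn_integral_cong)
    fix e
    have "ennreal (exponential_density 1 e) = ennreal (exp (-e)) * indicator {0..} e"
      by (simp add: exponential_density_def indicator_def)
    then show "ennreal (exponential_density 1 e) * (\<integral>\<^sup>+u. g (e, u) * indicator {0..1} u \<partial>lborel)
      = (\<integral>\<^sup>+u. g (e,u) * ennreal (exp (-e)) * indicator {0..} e * indicator {0..1} u \<partial>lborel)"
      by (simp add: nn_integral_cmult[symmetric] mult_ac)
  qed
  finally show ?thesis .
qed

lemma DENS:
  fixes g :: "real \<times> real \<Rightarrow> ennreal"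
  assumes "g \<in> borel_measurable borel"
  shows "(\<integral>\<^sup>+\<omega>. g (Tk E U (Suc j) \<omega>, Pk U (Suc j) \<omega>) \<partial>M) = (\<integral>\<^sup>+t. \<integral>\<^sup>+p. g (t,p) * fd j t p \<partial>lborel \<partial>lborel)"
  using assms
proof (induction j arbitrary: g)
  case 0
  have g[measurable]: "g \<in> borel_measurable (borel \<Otimes>\<^sub>M borel)" using 0 by (simp add: borel_prod)
  have "(\<integral>\<^sup>+\<omega>. g (Tk E U (Suc 0) \<omega>, Pk U (Suc 0) \<omega>) \<partial>M) = (\<integral>\<^sup>+\<omega>. g (E 1 \<omega>, U 1 \<omega>) \<partial>M)"
    by (simp add: Tk_def Pk_def)
  also have "\<dots> = (\<integral>\<^sup>+e. \<integral>\<^sup>+u. g (e,u) * ennreal (exp (-e)) * indicator {0..} e * indicator {0..1} u \<partial>lborel \<partial>lborel)"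
    by (rule EU) auto
  also have "\<dots> = (\<integral>\<^sup>+t. \<integral>\<^sup>+p. g (t,p) * fd 0 t p \<partial>lborel \<partial>lborel)"
    by (simp add: fd_def hh_0 mult_ac)
  finally show ?case .
next
  case (Suc j)
  have g[measurable]: "g \<in> borel_measurable (borel \<Otimes>\<^sub>M borel)" using Suc.prems by (simp add: borel_prod)
  have gb[measurable]: "g \<in> borel_measurable borel" using Suc.prems .
  note [measurable] = rvE rvU
  have "(\<integral>\<^sup>+\<omega>. g (Tk E U (Suc (Suc j)) \<omega>, Pk U (Suc (Suc j)) \<omega>) \<partial>M)
     = (\<integral>\<^sup>+\<omega>. (\<lambda>(a,b). g (fst a + fst b / snd a, snd a * snd b))
          ((Tk E U (Suc j) \<omega>, Pk U (Suc j) \<omega>), (E (Suc (Suc j)) \<omega>, U (Suc (Suc j)) \<omega>)) \<partial>M)"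
    by (simp add: Tk_Suc[of E U "Suc j"] Pk_Suc[of U "Suc j"])
  also have "\<dots> = (\<integral>\<^sup>+\<omega>. \<integral>\<^sup>+\<omega>'. (\<lambda>(a,b). g (fst a + fst b / snd a, snd a * snd b))
          ((Tk E U (Suc j) \<omega>, Pk U (Suc j) \<omega>), (E (Suc (Suc j)) \<omega>', U (Suc (Suc j)) \<omega>')) \<partial>M \<partial>M)"
    by (rule PAIR_INDEP[OF prob_space_axioms indep_TP]) measurable
  also have "\<dots> = (\<integral>\<^sup>+\<omega>. Hf g (Tk E U (Suc j) \<omega>) (Pk U (Suc j) \<omega>) \<partial>M)"
  proof (intro nn_integral_cong)
    fix \<omega>
    show "(\<integral>\<^sup>+\<omega>'. (\<lambda>(a,b). g (fst a + fst b / snd a, snd a * snd b))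
          ((Tk E U (Suc j) \<omega>, Pk U (Suc j) \<omega>), (E (Suc (Suc j)) \<omega>', U (Suc (Suc j)) \<omega>')) \<partial>M)
        = Hf g (Tk E U (Suc j) \<omega>) (Pk U (Suc j) \<omega>)"
      unfolding Hf_def
      by (simp, rule EU[of "Suc (Suc j)" "\<lambda>(e,u). g (Tk E U (Suc j) \<omega> + e / Pk U (Suc j) \<omega>, Pk U (Suc j) \<omega> * u)", simplified])
  qed
  also have "\<dots> = (\<integral>\<^sup>+t. \<integral>\<^sup>+p. Hf g t p * fd j t p \<partial>lborel \<partial>lborel)"
  proof -
    have m0: "(\<lambda>x. Hf g (fst x) (snd x)) \<in> borel_measurable (borel \<Otimes>\<^sub>M borel)" unfolding Hf_def by measurable
    then have m: "(\<lambda>x. Hf g (fst x) (snd x)) \<in> borel_measurable borel" by (simp add: borel_prod)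
    show ?thesis using Suc.IH[OF m] by simp
  qed
  also have "\<dots> = (\<integral>\<^sup>+t. \<integral>\<^sup>+p. g (t,p) * fd (Suc j) t p \<partial>lborel \<partial>lborel)"
    by (simp add: STEP)
  finally show ?case .
qed

end



lemma GG_mono: "0 \<le> s \<Longrightarrow> s \<le> t \<Longrightarrow> GG j s \<le> GG j t"
  by (rule DERIV_nonneg_imp_nondecreasing) (auto intro!: exI GG_deriv hh_nonneg)

lemma R_le_1: "0 \<le> s \<Longrightarrow> exp (-s) * Rsum (Suc j) s \<le> 1"
proof -
  assume s: "0 \<le> s"
  have "(\<lambda>x. exp (-x) * Rsum (Suc j) x) s \<le> (\<lambda>x. exp (-x) * Rsum (Suc j) x) 0"
  proof (rule DERIV_nonpos_imp_nonincreasing[OF s])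
    fix x :: real assume x: "0 \<le> x"
    have "0 \<le> exp (-x) * Gq j x" using x by (intro mult_nonneg_nonneg Gq_nonneg) auto
    then show "\<exists>y. ((\<lambda>x. exp (-x) * Rsum (Suc j) x) has_real_derivative y) (at x) \<and> y \<le> 0"
      using R_deriv[of j x] by (intro exI[of _ "- exp (-x) * Gq j x"]) auto
  qed
  then show ?thesis by (simp add: Rsum_0)
qed

lemma Rsum_nonneg: "0 \<le> s \<Longrightarrow> 0 \<le> Rsum k s"
  unfolding Rsum_def by (intro sum_nonneg hh_nonneg)

lemma exp_dens_int: "(\<integral>\<^sup>+t. ennreal (exponential_density 1 t) \<partial>lborel) = 1"
proof -
  interpret P: prob_space "density lborel (exponential_density 1)"
    by (rule prob_space_exponential_density) simp
  have "emeasure (density lborel (exponential_density 1)) UNIV = 1"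
    using P.emeasure_space_1 by simp
  then show ?thesis by (subst (asm) emeasure_density) auto
qed

lemma J_finite:
  assumes s: "s > 0"
  shows "(\<integral>\<^sup>+t. ennreal (exp (-t) / t) * indicator {s<..} t \<partial>lborel) \<le> ennreal (1/s)"
proof -
  have "(\<integral>\<^sup>+t. ennreal (exp (-t) / t) * indicator {s<..} t \<partial>lborel)
      \<le> (\<integral>\<^sup>+t. ennreal (1/s) * ennreal (exponential_density 1 t) \<partial>lborel)"
  proof (intro nn_integral_mono)
    fix t
    show "ennreal (exp (-t) / t) * indicator {s<..} t \<le> ennreal (1/s) * ennreal (exponential_density 1 t)"
    proof (cases "t > s")
      case True
      have "exp (-t) / t \<le> 1/s * exp (-t)" using True s by (simp add: field_simps)
      then show ?thesis using True s by (simp add: exponential_density_def ennreal_mult[symmetric])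
    qed (simp add: indicator_def)
  qed
  also have "\<dots> = ennreal (1/s)" by (simp add: nn_integral_cmult exp_dens_int)
  finally show ?thesis .
qed

lemma Ifun_eq:
  assumes s: "s > 0"
  shows "(\<integral>\<^sup>+t. ennreal (exp (-t) / t) * indicator {s<..} t \<partial>lborel) = ennreal (Ifun s)"
proof -
  define J where "J = (\<integral>\<^sup>+t. ennreal (exp (-t) / t) * indicator {s<..} t \<partial>lborel)"
  have "J < \<infinity>" using J_finite[OF s] unfolding J_def by (simp add: order.strict_trans1)
  then obtain r where r: "J = ennreal r" "0 \<le> r" by (cases J) auto
  have "(\<integral>\<^sup>+t. ennreal (indicator {s<..} t * (exp (-t) / t)) \<partial>lborel) = J"
    unfolding J_def by (intro nn_integral_cong) (simp add: indicator_def)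
  then have "integrable lborel (\<lambda>t. indicator {s<..} t * (exp (-t) / t)) \<and>
       integral\<^sup>L lborel (\<lambda>t. indicator {s<..} t * (exp (-t) / t)) = r"
    using r by (subst nn_integral_eq_integrable[symmetric]) (use s in \<open>auto simp: indicator_def\<close>)
  then have "Ifun s = r"
    by (simp add: Ifun_def interval_integral_to_infinity_eq set_lebesgue_integral_def)
  then show ?thesis using r unfolding J_def by simp
qed

lemma Ifun_nonneg:
  assumes s: "s > 0" shows "0 \<le> Ifun s"
  unfolding Ifun_def interval_integral_to_infinity_eq set_lebesgue_integral_def
  by (rule Bochner_Integration.integral_nonneg) (use s in \<open>auto simp: indicator_def\<close>)

lemma GG_LBINT: "s \<ge> 0 \<Longrightarrow> (LBINT \<xi>=0..s. exp \<xi> * pfun j \<xi>) = GG j s"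
proof -
  assume s: "s \<ge> 0"
  have e: "exp \<xi> * pfun j \<xi> = hh j \<xi>" for \<xi>
    by (simp add: pfun_eq mult.assoc[symmetric] exp_minus_inverse)
  have "(LBINT \<xi>=ereal 0..ereal s. hh j \<xi>) = GG j s - GG j 0"
  proof (rule interval_integral_FTC_finite)
    show "continuous_on {min 0 s..max 0 s} (hh j)" by (rule cont_hh)
    fix x
    show "(GG j has_vector_derivative hh j x) (at x within {min 0 s..max 0 s})"
      using GG_deriv[of j x] by (simp add: has_real_derivative_iff_has_vector_derivative[symmetric] has_field_derivative_at_within)
  qed
  then show ?thesis by (simp add: e GG_0 zero_ereal_def)
qed

lemma sum_pfun: "(\<Sum>i=0..j. pfun i s) = exp (-s) * Rsum (Suc j) s"
  by (simp add: Rsum_def pfun_eq sum_distrib_left atLeast0AtMost lessThan_Suc_atMost)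

context kset
begin

lemma TOT: "(\<integral>\<^sup>+t. ennreal (exp (-t) * Gq j t) * indicator {0<..} t \<partial>lborel) = 1"
proof -
  have "1 = (\<integral>\<^sup>+\<omega>. (\<lambda>_. 1::ennreal) (Tk E U (Suc j) \<omega>, Pk U (Suc j) \<omega>) \<partial>M)"
    using emeasure_space_1 by simp
  also have "\<dots> = (\<integral>\<^sup>+t. \<integral>\<^sup>+p. (\<lambda>_. 1::ennreal) (t,p) * fd j t p \<partial>lborel \<partial>lborel)"
    by (rule DENS) simp
  also have "\<dots> = (\<integral>\<^sup>+t. ennreal (exp (-t) * Gq j t) * indicator {0<..} t \<partial>lborel)"
  proof (rule nn_integral_cong_AE)
    show "AE t in lborel. (\<integral>\<^sup>+p. (\<lambda>_. 1::ennreal) (t,p) * fd j t p \<partial>lborel) = ennreal (exp (-t) * Gq j t) * indicator {0<..} t"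
      using AE_lborel_singleton[of 0]
    proof eventually_elim
      case (elim t)
      show ?case
      proof (cases "t > 0")
        case False
        then have "t < 0" using elim by simp
        then show ?thesis by (simp add: fd_def)
      next
        case True
        have "(\<integral>\<^sup>+p. (\<lambda>_. 1::ennreal) (t,p) * fd j t p \<partial>lborel)
           = (\<integral>\<^sup>+p. ennreal (exp (-t) * hh j (t*(1-p))) * indicator {0..1-0/t} p \<partial>lborel)"
          using True by (intro nn_integral_cong) (simp add: fd_def)
        also have "\<dots> = ennreal (exp (-t) * (GG j t - GG j 0) / t)"
          by (rule S_int) (use True in auto)
        also have "\<dots> = ennreal (exp (-t) * Gq j t) * indicator {0<..} t"
          using True by (simp add: GG_0 GG_eq)
        finally show ?thesis .
      qed
    qed
  qed
  finally show ?thesis by simp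
qed

lemma PR:
  assumes s: "s > 0"
  shows "emeasure M {\<omega> \<in> space M. Avar E U (Suc j) \<omega> > s}
     = (\<integral>\<^sup>+t. ennreal (exp (-t) * (GG j t - GG j s) / t) * indicator {s<..} t \<partial>lborel)"
proof -
  define gs where "gs x = (if fst x * (1 - snd x) > s then 1 else 0 :: ennreal)" for x :: "real \<times> real"
  have [measurable]: "gs \<in> borel_measurable borel"
  proof -
    have "gs \<in> borel_measurable (borel \<Otimes>\<^sub>M borel)" unfolding gs_def by measurable
    then show ?thesis by (simp add: borel_prod)
  qed
  have "emeasure M {\<omega> \<in> space M. Avar E U (Suc j) \<omega> > s}
      = (\<integral>\<^sup>+\<omega>. indicator {\<omega> \<in> space M. Avar E U (Suc j) \<omega> > s} \<omega> \<partial>M)"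
  proof (rule nn_integral_indicator[symmetric])
    have [measurable]: "E i \<in> borel_measurable M" "U i \<in> borel_measurable M" if "i \<ge> 1" for i
      using rvE rvU that by auto
    have "(\<lambda>\<omega>. Avar E U (Suc j) \<omega>) \<in> borel_measurable M"
      unfolding Avar_def
      by (intro borel_measurable_times borel_measurable_diff borel_measurable_const borel_measurable_sum
          borel_measurable_divide borel_measurable_prod) (auto intro: rvE rvU)
    then show "{\<omega> \<in> space M. Avar E U (Suc j) \<omega> > s} \<in> sets M" by measurable
  qed
  also have "\<dots> = (\<integral>\<^sup>+\<omega>. gs (Tk E U (Suc j) \<omega>, Pk U (Suc j) \<omega>) \<partial>M)"
    by (intro nn_integral_cong) (simp add: gs_def Avar_def Tk_def Pk_def indicator_def)
  also have "\<dots> = (\<integral>\<^sup>+t. \<integral>\<^sup>+p. gs (t,p) * fd j t p \<partial>lborel \<partial>lborel)"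
    by (rule DENS) simp
  also have "\<dots> = (\<integral>\<^sup>+t. ennreal (exp (-t) * (GG j t - GG j s) / t) * indicator {s<..} t \<partial>lborel)"
  proof (rule nn_integral_cong)
    fix t
    show "(\<integral>\<^sup>+p. gs (t,p) * fd j t p \<partial>lborel) = ennreal (exp (-t) * (GG j t - GG j s) / t) * indicator {s<..} t"
    proof (cases "t > s")
      case False
      have z: "gs (t,p) * fd j t p = 0" for p
      proof (cases "0 \<le> t \<and> 0 \<le> p \<and> p \<le> 1")
        case True
        then have "t * (1 - p) \<le> s" using False by (simp add: algebra_simps) (meson mult_nonneg_nonneg order_trans le_diff_eq le_add_same_cancel1 not_less)
        then show ?thesis by (simp add: gs_def)
      next
        case False
        then show ?thesis by (auto simp: fd_def indicator_def)
      qed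
      have "(\<integral>\<^sup>+p. gs (t,p) * fd j t p \<partial>lborel) = 0" by (simp only: z) simp
      then show ?thesis using False by simp
    next
      case True
      have "(\<integral>\<^sup>+p. gs (t,p) * fd j t p \<partial>lborel)
         = (\<integral>\<^sup>+p. ennreal (exp (-t) * hh j (t*(1-p))) * indicator {0..1-s/t} p \<partial>lborel)"
      proof (rule nn_integral_cong_AE)
        show "AE p in lborel. gs (t,p) * fd j t p = ennreal (exp (-t) * hh j (t*(1-p))) * indicator {0..1-s/t} p"
          using AE_lborel_singleton[of "1 - s/t"]
        proof eventually_elim
          case (elim p)
          have t0: "t > 0" using True s by simp
          have iff: "t * (1 - p) > s \<longleftrightarrow> p < 1 - s/t"
            using t0 by (simp add: field_simps)
          have "s / t > 0" using t0 s by simp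
          then show ?case using elim iff t0
            by (auto simp: gs_def fd_def indicator_def)
        qed
      qed
      also have "\<dots> = ennreal (exp (-t) * (GG j t - GG j s) / t)"
        by (rule S_int) (use True s in auto)
      finally show ?thesis using True by simp
    qed
  qed
  finally show ?thesis .
qed

lemma MAIN:
  assumes s: "s > 0"
  shows "measure M {\<omega> \<in> space M. Avar E U (Suc j) \<omega> > s}
     = - Ifun s * (LBINT \<xi>=0..s. exp \<xi> * pfun j \<xi>) + (\<Sum>i=0..Suc j - 1. pfun i s)"
proof -
  define R where "R = exp (-s) * Rsum (Suc j) s"
  define F where "F t = ennreal (exp (-t) * Gq j t)" for t
  define X where "X = (\<integral>\<^sup>+t. F t * indicator {s<..} t \<partial>lborel)"
  define Pr where "Pr = (\<integral>\<^sup>+t. ennreal (exp (-t) * (GG j t - GG j s) / t) * indicator {s<..} t \<partial>lborel)"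
  have R0: "0 \<le> R" using s by (simp add: R_def Rsum_nonneg)
  have R1: "R \<le> 1" using s R_le_1[of s j] by (simp add: R_def)
  have [measurable]: "F \<in> borel_measurable borel" unfolding F_def by measurable
  have "1 = (\<integral>\<^sup>+t. F t * indicator {0<..} t \<partial>lborel)" using TOT[of j] by (simp add: F_def)
  also have "\<dots> = (\<integral>\<^sup>+t. F t * indicator {0..s} t + F t * indicator {s<..} t \<partial>lborel)"
  proof (rule nn_integral_cong_AE)
    show "AE t in lborel. F t * indicator {0<..} t = F t * indicator {0..s} t + F t * indicator {s<..} t"
      using AE_lborel_singleton[of 0] by eventually_elim (use s in \<open>auto simp: indicator_def\<close>)
  qed
  also have "\<dots> = (\<integral>\<^sup>+t. F t * indicator {0..s} t \<partial>lborel) + X"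
    unfolding X_def by (rule nn_integral_add) auto
  also have "(\<integral>\<^sup>+t. F t * indicator {0..s} t \<partial>lborel) = ennreal (1 - R)"
    unfolding F_def R_def using R_int[of s j] s by simp
  finally have "ennreal (1 - R) + X = ennreal (1 - R) + ennreal R"
    using R0 R1 by (simp add: ennreal_plus[symmetric])
  then have XR: "X = ennreal R" by (simp add: ennreal_add_left_cancel)
  have "X = (\<integral>\<^sup>+t. ennreal (exp (-t) * (GG j t - GG j s) / t) * indicator {s<..} t
                   + ennreal (GG j s) * (ennreal (exp (-t) / t) * indicator {s<..} t) \<partial>lborel)"
    unfolding X_def
  proof (intro nn_integral_cong)
    fix t
    show "F t * indicator {s<..} t = ennreal (exp (-t) * (GG j t - GG j s) / t) * indicator {s<..} t
                   + ennreal (GG j s) * (ennreal (exp (-t) / t) * indicator {s<..} t)"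
    proof (cases "t > s")
      case True
      have t0: "t > 0" using True s by simp
      have e: "exp (-t) * Gq j t = exp (-t) * (GG j t - GG j s) / t + GG j s * (exp (-t) / t)"
        using t0 by (simp add: GG_eq field_simps)
      have n1: "0 \<le> exp (-t) * (GG j t - GG j s) / t"
        using t0 True s GG_mono[of s t j] by (intro divide_nonneg_nonneg mult_nonneg_nonneg) auto
      have n2: "0 \<le> GG j s" using s by (intro GG_nonneg) simp
      have n3: "0 \<le> exp (-t) / t" using t0 by simp
      have "F t = ennreal (exp (-t) * (GG j t - GG j s) / t + GG j s * (exp (-t) / t))"
        unfolding F_def e ..
      also have "\<dots> = ennreal (exp (-t) * (GG j t - GG j s) / t) + ennreal (GG j s) * ennreal (exp (-t) / t)"
        by (simp only: ennreal_plus[OF n1 mult_nonneg_nonneg[OF n2 n3]] ennreal_mult[OF n2 n3])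
      finally show ?thesis using True by simp
    qed simp
  qed
  also have "\<dots> = Pr + ennreal (GG j s) * (\<integral>\<^sup>+t. ennreal (exp (-t) / t) * indicator {s<..} t \<partial>lborel)"
    unfolding Pr_def by (subst nn_integral_add) (auto simp: nn_integral_cmult)
  also have "\<dots> = Pr + ennreal (GG j s * Ifun s)"
    using s by (simp add: Ifun_eq ennreal_mult GG_nonneg Ifun_nonneg)
  finally have eq: "ennreal R = Pr + ennreal (GG j s * Ifun s)" using XR by simp
  have c0: "0 \<le> GG j s * Ifun s" using s by (simp add: GG_nonneg Ifun_nonneg)
  have "Pr = ennreal R - ennreal (GG j s * Ifun s)" unfolding eq by simp
  also have "\<dots> = ennreal (R - GG j s * Ifun s)" using c0 by (simp add: ennreal_minus)
  finally have PrR: "Pr = ennreal (R - GG j s * Ifun s)" .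
  have "ennreal (GG j s * Ifun s) \<le> ennreal R" unfolding eq by simp
  then have le: "GG j s * Ifun s \<le> R" using R0 by (simp add: ennreal_le_iff)
  have "measure M {\<omega> \<in> space M. Avar E U (Suc j) \<omega> > s} = enn2real Pr"
    unfolding measure_def PR[OF s] Pr_def ..
  also have "\<dots> = R - GG j s * Ifun s" using PrR le by simp
  also have "\<dots> = - Ifun s * (LBINT \<xi>=0..s. exp \<xi> * pfun j \<xi>) + (\<Sum>i=0..Suc j - 1. pfun i s)"
    using s by (simp add: GG_LBINT sum_pfun R_def)
  finally show ?thesis .
qed

end


theorem theorem1:
  fixes M :: "'a measure" and E U :: "nat \<Rightarrow> 'a \<Rightarrow> real" and k :: nat and s :: real
  assumes "prob_space M"
    and "prob_space.indep_vars M (\<lambda>_. borel)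
           (\<lambda>i. case i of Inl j \<Rightarrow> E j | Inr j \<Rightarrow> U j)
           (Inl ` {1..} \<union> Inr ` {1..})"
    and "\<And>j. j \<ge> 1 \<Longrightarrow> distributed M lborel (E j) (exponential_density 1)"
    and "\<And>j. j \<ge> 1 \<Longrightarrow> distr M lborel (U j) = uniform_measure lborel {0..1}"
    and "k \<ge> 1" and "s > 0"
  shows "measure M {\<omega> \<in> space M. Avar E U k \<omega> > s}
           = - Ifun s * (LBINT \<xi>=0..s. exp \<xi> * pfun (k - 1) \<xi>)
             + (\<Sum>j=0..k-1. pfun j s)"
proof -
  interpret kset M E U
    by (rule kset.intro[OF assms(1)], unfold_locales) (use assms in auto)
  obtain j where k: "k = Suc j" using assms(5) by (cases k) auto
  show ?thesis using MAIN[OF assms(6), of j] unfolding k by simp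
qed

end
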